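(* For all integers $k_1,k_2,n_3$, the following identity holds in $\mathcal{F}$: $$R_{12}^{-1,k_2+1,n_3}+A^{2}R_{12}^{0,k_2,n_3-1}+A^2R_{12}^{0,k_2,n_3+1}+A^{4}R_{12}^{1,k_2-1,n_3}=0.$$
   Context: $\mathcal{F}$ is the free $\mathbb{Z}[A^{\pm1}]$-module with basis the symbols $s_1^{l_1}s_2^{l_2}s_3^{l_3}$, $l_i\ge 0$, extended multilinearly to integer exponents by $s_i^{-1}=0$ and $s_i^{n}=-s_i^{-n-2}$ for $n\le -2$. For $n_i\in\mathbb{Z}$, $R_{12}(n_1,n_2,n_3)=-A^{-n_1-n_2-2}s_1^{n_1}s_2^{n_2}s_3^{n_3}-A^{-n_1-n_2+2}s_1^{n_1-2}s_2^{n_2-2}s_3^{n_3}-A^{-n_1-n_2}s_1^{n_1-1}s_2^{n_2-1}s_3^{n_3+1}-A^{-n_1-n_2}s_1^{n_1-1}s_2^{n_2-1}s_3^{n_3-1}$, and $R_{12}^{n_1,n_2,n_3}=R_{12}(n_1,n_2,n_3)-R_{12}(-n_1+k_1,-n_2+k_2,n_3)$. *)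

theory Defs
  imports Main "HOL-Library.Function_Algebras"
begin

text \<open>Elements of the free Z[A^{+-1}]-module F with basis s1^l1 s2^l2 s3^l3 (l_i >= 0)
  are represented by their coefficient functions: x (l1,l2,l3) j is the coefficient
  of A^j s1^l1 s2^l2 s3^l3.  (The free module embeds into this function space;
  addition / negation / zero are pointwise.)\<close>
type_synonym F = "nat \<times> nat \<times> nat \<Rightarrow> int \<Rightarrow> int"

definition Amul :: "int \<Rightarrow> F \<Rightarrow> F" where
  "Amul m x = (\<lambda>b j. x b (j - m))"

text \<open>Extension of s^n to integer n: s^n for n >= 0 is the basis exponent,
  s^{-1} = 0, s^n = - s^{-n-2} for n <= -2.  Returns (sign coefficient, exponent).\<close>
definition sext :: "int \<Rightarrow> int \<times> nat" where
  "sext n = (if n \<ge> 0 then (1, nat n) else if n = -1 then (0, 0) else (-1, nat (-n-2)))"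

text \<open>smon m n1 n2 n3 = A^m s1^n1 s2^n2 s3^n3, extended multilinearly.\<close>
definition smon :: "int \<Rightarrow> int \<Rightarrow> int \<Rightarrow> int \<Rightarrow> F" where
  "smon m n1 n2 n3 = (\<lambda>b j.
     if b = (snd (sext n1), snd (sext n2), snd (sext n3)) \<and> j = m
     then fst (sext n1) * fst (sext n2) * fst (sext n3) else 0)"

definition R12 :: "int \<Rightarrow> int \<Rightarrow> int \<Rightarrow> F" where
  "R12 n1 n2 n3 =
     - smon (-n1-n2-2) n1 n2 n3
     - smon (-n1-n2+2) (n1-2) (n2-2) n3
     - smon (-n1-n2) (n1-1) (n2-1) (n3+1)
     - smon (-n1-n2) (n1-1) (n2-1) (n3-1)"

definition R12sup :: "int \<Rightarrow> int \<Rightarrow> int \<Rightarrow> int \<Rightarrow> int \<Rightarrow> F" where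
  "R12sup k1 k2 n1 n2 n3 = R12 n1 n2 n3 - R12 (-n1+k1) (-n2+k2) n3"

end

theory Submission
  imports Defs
begin

lemma Amul_smon[simp]: "Amul k (smon m a b c) = smon (m+k) a b c"
  unfolding Amul_def smon_def by (rule ext)+ auto

lemma Amul_add[simp]: "Amul k (x + y) = Amul k x + Amul k y"
  unfolding Amul_def by (intro ext) simp
lemma Amul_diff[simp]: "Amul k (x - y) = Amul k x - Amul k y"
  unfolding Amul_def by (intro ext) simp
lemma Amul_uminus[simp]: "Amul k (- x) = - Amul k x"
  unfolding Amul_def by (intro ext) simp

lemma sext_m1: "sext (-1) = (0,0)" by (simp add: sext_def)
lemma sext_refl: "n \<le> -2 \<Longrightarrow> sext n = (- fst (sext (-n-2)), snd (sext (-n-2)))"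
  by (simp add: sext_def)

lemma smon_m1a[simp]: "smon m (-1) b c = 0"
  unfolding smon_def sext_m1 by (rule ext)+ auto
lemma smon_m1b[simp]: "smon m a (-1) c = 0"
  unfolding smon_def sext_m1 by (rule ext)+ auto
lemma smon_ra[simp]: "a \<le> -2 \<Longrightarrow> smon m a b c = - smon m (-a-2) b c"
  unfolding smon_def using sext_refl[of a] by (intro ext) auto
lemma smon_rb[simp]: "b \<le> -2 \<Longrightarrow> smon m a b c = - smon m a (-b-2) c"
  unfolding smon_def using sext_refl[of b] by (intro ext) auto

theorem lemma3p6:
  fixes k1 k2 n3 :: int
  shows "R12sup k1 k2 (-1) (k2+1) n3 + Amul 2 (R12sup k1 k2 0 k2 (n3-1))
       + Amul 2 (R12sup k1 k2 0 k2 (n3+1)) + Amul 4 (R12sup k1 k2 1 (k2-1) n3) = 0"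
  unfolding R12sup_def R12_def
  apply (simp add: algebra_simps)
  done

end
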